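(* Let $P$ and $Q$ be rational Herglotz functions vanishing at infinity, i.e. $P(z)=\sum_{j\in J_1}A_j(p_j-z)^{-1}$ and $Q(z)=\sum_{\ell\in J_2}B_\ell(q_\ell-z)^{-1}$ with finite index sets $J_1,J_2$, $A_j\ge 0$, $B_\ell\ge 0$, $p_j,q_\ell\in\mathbb{R}$. Let $\Gamma$ be a closed, clockwise oriented Jordan contour in $\mathbb{C}$ containing no pole of $P$ or $Q$, such that every pole of $P$ or $Q$ lying in the interior of $\Gamma$ is strictly smaller than every pole of $P$ or $Q$ lying in the exterior of $\Gamma$ (i.e. $\Gamma$ encircles some of the poles "starting from the left"). Then $$\frac{1}{2\pi i}\oint_\Gamma dz\,P(z)Q(z)\ge 0.$$
   Context: A Herglotz function is an analytic function $f:\mathbb{C}_+\to\mathbb{C}$ with $f(\mathbb{C}_+)\subseteq\mathbb{C}_+$, where $\mathbb{C}_+$ is the open upper half-plane. *)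

theory Defs
  imports "HOL-Complex_Analysis.Complex_Analysis"
begin

definition rat_herglotz :: "'i set \<Rightarrow> ('i \<Rightarrow> real) \<Rightarrow> ('i \<Rightarrow> real) \<Rightarrow> complex \<Rightarrow> complex" where
  "rat_herglotz J A p z = (\<Sum>j\<in>J. complex_of_real (A j) / (complex_of_real (p j) - z))"

definition rat_herglotz_poles :: "'i set \<Rightarrow> ('i \<Rightarrow> real) \<Rightarrow> ('i \<Rightarrow> real) \<Rightarrow> real set" where
  "rat_herglotz_poles J A p = {p j | j. j \<in> J \<and> A j > 0}"

end

theory Submission
  imports Defs
begin

definition indic_in :: "(real \<Rightarrow> complex) \<Rightarrow> real \<Rightarrow> real" where
  "indic_in g x = (if complex_of_real x \<in> inside (path_image g) then 1 else 0)"

definition cpair :: "(real \<Rightarrow> complex) \<Rightarrow> real \<Rightarrow> real \<Rightarrow> real" where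
  "cpair g a b = (if a = b then 0 else (indic_in g a - indic_in g b) / (b - a))"

lemma wn_real:
  assumes "valid_path g" "pathfinish g = pathstart g"
    and "\<forall>z\<in>inside (path_image g). winding_number g z = -1"
    and "complex_of_real x \<notin> path_image g"
  shows "winding_number g (complex_of_real x) = - complex_of_real (indic_in g x)"
proof (cases "complex_of_real x \<in> inside (path_image g)")
  case True
  then show ?thesis using assms by (simp add: indic_in_def)
next
  case False
  then have "complex_of_real x \<in> outside (path_image g)"
    using assms(4) inside_Un_outside[of "path_image g"] by blast
  then show ?thesis using assms False
    by (simp add: indic_in_def winding_number_zero_in_outside valid_path_imp_path)
qed

lemma key:
  assumes g: "valid_path g" "pathfinish g = pathstart g"
    and w: "\<forall>z\<in>inside (path_image g). winding_number g z = -1"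
    and a: "complex_of_real a \<notin> path_image g"
    and b: "complex_of_real b \<notin> path_image g"
  shows "((\<lambda>z. 1 / ((complex_of_real a - z) * (complex_of_real b - z))) has_contour_integral
          (2 * of_real pi * \<i> * complex_of_real (cpair g a b))) g"
proof (cases "a = b")
  case True
  let ?f = "\<lambda>z. 1 / (complex_of_real a - z)"
  have d: "(?f has_field_derivative 1 / ((complex_of_real a - z) * (complex_of_real b - z)))
           (at z within (- {complex_of_real a}))" if "z \<in> - {complex_of_real a}" for z
  proof -
    have nz: "complex_of_real a \<noteq> z" using that by auto
    show ?thesis using True nz
      by (auto intro!: derivative_eq_intros simp: field_simps power2_eq_square)
  qed
  have "path_image g \<subseteq> - {complex_of_real a}" using a by auto
  from contour_integral_primitive[OF d g(1) this] g(2)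
  show ?thesis using True by (simp add: cpair_def)
next
  case False
  have nz: "complex_of_real b - complex_of_real a \<noteq> 0" using False by simp
  have ia: "((\<lambda>w. 1/(w - complex_of_real a)) has_contour_integral
        (2*pi*\<i>*winding_number g (complex_of_real a))) g"
    by (rule has_contour_integral_winding_number[OF g(1) a])
  have ib: "((\<lambda>w. 1/(w - complex_of_real b)) has_contour_integral
        (2*pi*\<i>*winding_number g (complex_of_real b))) g"
    by (rule has_contour_integral_winding_number[OF g(1) b])
  have c: "((\<lambda>w. (1 / (complex_of_real b - complex_of_real a)) *
        (1/(w - complex_of_real b) - 1/(w - complex_of_real a))) has_contour_integral
        (1 / (complex_of_real b - complex_of_real a)) *
        (2*pi*\<i>*winding_number g (complex_of_real b) - 2*pi*\<i>*winding_number g (complex_of_real a))) g"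
    by (intro has_contour_integral_lmul has_contour_integral_diff ib ia)
  have val: "(1 / (complex_of_real b - complex_of_real a)) *
        (2*pi*\<i>*winding_number g (complex_of_real b) - 2*pi*\<i>*winding_number g (complex_of_real a))
        = 2 * of_real pi * \<i> * complex_of_real (cpair g a b)"
    using wn_real[OF g w a] wn_real[OF g w b] False nz
    by (simp add: cpair_def field_simps)
  show ?thesis
  proof (rule has_contour_integral_eq[OF c[unfolded val]])
    fix x assume x: "x \<in> path_image g"
    have "x \<noteq> complex_of_real a" "x \<noteq> complex_of_real b" using x a b by auto
    then show "(1 / (complex_of_real b - complex_of_real a)) *
        (1/(x - complex_of_real b) - 1/(x - complex_of_real a)) =
        1 / ((complex_of_real a - x) * (complex_of_real b - x))"
      using nz by (simp add: field_simps)
  qed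
qed

theorem lemma2p1:
  fixes J1 :: "'i set" and J2 :: "'k set"
    and A p :: "'i \<Rightarrow> real" and B q :: "'k \<Rightarrow> real"
    and g :: "real \<Rightarrow> complex"
  assumes "finite J1" and "finite J2"
    and "\<forall>j\<in>J1. A j \<ge> 0" and "\<forall>l\<in>J2. B l \<ge> 0"
    and "valid_path g" and "simple_path g" and "pathfinish g = pathstart g"
    and "\<forall>z\<in>inside (path_image g). winding_number g z = -1"
    and "\<forall>x\<in>rat_herglotz_poles J1 A p \<union> rat_herglotz_poles J2 B q.
           complex_of_real x \<notin> path_image g"
    and "\<forall>x\<in>rat_herglotz_poles J1 A p \<union> rat_herglotz_poles J2 B q.
         \<forall>y\<in>rat_herglotz_poles J1 A p \<union> rat_herglotz_poles J2 B q.
           complex_of_real x \<in> inside (path_image g) \<longrightarrow>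
           complex_of_real y \<in> outside (path_image g) \<longrightarrow> x < y"
  shows "\<exists>r\<ge>0. contour_integral g (\<lambda>z. rat_herglotz J1 A p z * rat_herglotz J2 B q z)
                 / (2 * of_real pi * \<i>) = complex_of_real r"
proof -
  let ?P = "rat_herglotz_poles J1 A p \<union> rat_herglotz_poles J2 B q"
  define v where "v j l = A j * B l * cpair g (p j) (q l)" for j l
  have out: "complex_of_real x \<in> outside (path_image g)"
    if "x \<in> ?P" "complex_of_real x \<notin> inside (path_image g)" for x
    using that assms(9) inside_Un_outside[of "path_image g"] by blast
  have cnn: "cpair g x y \<ge> 0" if "x \<in> ?P" "y \<in> ?P" for x y
  proof (cases "x = y")
    case True then show ?thesis by (simp add: cpair_def)
  next
    case False
    show ?thesis
    proof (cases "complex_of_real x \<in> inside (path_image g)";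
           cases "complex_of_real y \<in> inside (path_image g)")
      assume "complex_of_real x \<in> inside (path_image g)" "complex_of_real y \<notin> inside (path_image g)"
      then have "x < y" using assms(10) that out[of y] by blast
      then show ?thesis using False \<open>complex_of_real x \<in> _\<close> \<open>complex_of_real y \<notin> _\<close>
        by (simp add: cpair_def indic_in_def)
    next
      assume "complex_of_real x \<notin> inside (path_image g)" "complex_of_real y \<in> inside (path_image g)"
      then have "y < x" using assms(10) that out[of x] by blast
      then show ?thesis using False \<open>complex_of_real x \<notin> _\<close> \<open>complex_of_real y \<in> _\<close>
        by (simp add: cpair_def indic_in_def divide_nonneg_neg)
    qed (use False in \<open>auto simp: cpair_def indic_in_def\<close>)
  qed
  have vnn: "v j l \<ge> 0" if "j \<in> J1" "l \<in> J2" for j l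
  proof (cases "A j = 0 \<or> B l = 0")
    case True then show ?thesis by (auto simp: v_def)
  next
    case False
    then have "A j > 0" "B l > 0" using assms(3,4) that by force+
    then have "p j \<in> ?P" "q l \<in> ?P" using that by (auto simp: rat_herglotz_poles_def)
    then show ?thesis using cnn \<open>A j > 0\<close> \<open>B l > 0\<close> by (simp add: v_def)
  qed
  have trm: "((\<lambda>z. complex_of_real (A j) / (complex_of_real (p j) - z) *
                 (complex_of_real (B l) / (complex_of_real (q l) - z))) has_contour_integral
               (2 * of_real pi * \<i> * complex_of_real (v j l))) g"
    if "j \<in> J1" "l \<in> J2" for j l
  proof (cases "A j = 0 \<or> B l = 0")
    case True then show ?thesis by (auto simp: v_def has_contour_integral_0)
  next
    case False
    then have "A j > 0" "B l > 0" using assms(3,4) that by force+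
    then have "p j \<in> ?P" "q l \<in> ?P" using that by (auto simp: rat_herglotz_poles_def)
    then have pa: "complex_of_real (p j) \<notin> path_image g" "complex_of_real (q l) \<notin> path_image g"
      using assms(9) by blast+
    have "((\<lambda>z. complex_of_real (A j * B l) *
            (1 / ((complex_of_real (p j) - z) * (complex_of_real (q l) - z)))) has_contour_integral
          complex_of_real (A j * B l) * (2 * of_real pi * \<i> * complex_of_real (cpair g (p j) (q l)))) g"
      by (intro has_contour_integral_lmul key assms(5,7,8) pa)
    then show ?thesis by (simp add: v_def algebra_simps)
  qed
  have S: "((\<lambda>z. \<Sum>j\<in>J1. \<Sum>l\<in>J2. complex_of_real (A j) / (complex_of_real (p j) - z) *
                 (complex_of_real (B l) / (complex_of_real (q l) - z))) has_contour_integral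
         (\<Sum>j\<in>J1. \<Sum>l\<in>J2. 2 * of_real pi * \<i> * complex_of_real (v j l))) g"
    by (intro has_contour_integral_sum assms(1,2) trm)
  have fe: "(\<lambda>z. \<Sum>j\<in>J1. \<Sum>l\<in>J2. complex_of_real (A j) / (complex_of_real (p j) - z) *
                 (complex_of_real (B l) / (complex_of_real (q l) - z))) =
          (\<lambda>z. rat_herglotz J1 A p z * rat_herglotz J2 B q z)"
    by (simp only: rat_herglotz_def sum_product)
  have ve: "(\<Sum>j\<in>J1. \<Sum>l\<in>J2. 2 * of_real pi * \<i> * complex_of_real (v j l)) =
         2 * of_real pi * \<i> * complex_of_real (\<Sum>j\<in>J1. \<Sum>l\<in>J2. v j l)"
    by (simp add: sum_distrib_left)
  have "((\<lambda>z. rat_herglotz J1 A p z * rat_herglotz J2 B q z) has_contour_integral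
         (2 * of_real pi * \<i> * complex_of_real (\<Sum>j\<in>J1. \<Sum>l\<in>J2. v j l))) g"
    using S unfolding fe ve .
  then have "contour_integral g (\<lambda>z. rat_herglotz J1 A p z * rat_herglotz J2 B q z)
        / (2 * of_real pi * \<i>) = complex_of_real (\<Sum>j\<in>J1. \<Sum>l\<in>J2. v j l)"
    by (simp add: contour_integral_unique)
  moreover have "(\<Sum>j\<in>J1. \<Sum>l\<in>J2. v j l) \<ge> 0"
    by (intro sum_nonneg vnn)
  ultimately show ?thesis by blast
qed

end
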